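(* Let $V$ be an irreducible Whittaker module of type $\eta$ over $R$ with cyclic Whittaker vector $w$. Then $\{H^iw : i\ge 0\}$ is a $\mathbb{C}$-basis of $V$.
   Context: Let $f\in\mathbb{C}[H]$ be a polynomial. $R=R(f)$ is the associative $\mathbb{C}$-algebra generated by $E,F,H$ with relations $EF-FE=f(H)$, $HE-EH=E$, $HF-FH=-F$. Let $R(E)=\mathbb{C}[E]$. Fix an algebra homomorphism $\eta:R(E)\to\mathbb{C}$ with $\eta(E)\neq0$. A vector $v$ of an $R$-module $V$ is a Whittaker vector of type $\eta$ if $Ev=\eta(E)v$; $V$ is a Whittaker module of type $\eta$ with cyclic Whittaker vector $w$ if $w$ is a Whittaker vector and $V=Rw$. *)

theory Defs
  imports Main "HOL-Computational_Algebra.Polynomial"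
begin

text \<open>An R(f)-module structure
is given by three complex-linear operators E, F, H satisfying the defining relations
of R(f); by the universal property of the algebra presented by generators and
relations this is the same as a (unital) R(f)-module.\<close>

definition poly_op :: "(complex \<Rightarrow> 'v::ab_group_add \<Rightarrow> 'v) \<Rightarrow> complex poly \<Rightarrow> ('v \<Rightarrow> 'v) \<Rightarrow> 'v \<Rightarrow> 'v"
  where "poly_op scale p A v = (\<Sum>i\<le>degree p. scale (coeff p i) ((A ^^ i) v))"

definition R_module ::
  "(complex \<Rightarrow> 'v::ab_group_add \<Rightarrow> 'v) \<Rightarrow> complex poly \<Rightarrow> ('v \<Rightarrow> 'v) \<Rightarrow> ('v \<Rightarrow> 'v) \<Rightarrow> ('v \<Rightarrow> 'v) \<Rightarrow> bool"
  where "R_module scale f E F H \<longleftrightarrow>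
     vector_space scale \<and>
     Vector_Spaces.linear scale scale E \<and> Vector_Spaces.linear scale scale F \<and>
     Vector_Spaces.linear scale scale H \<and>
     (\<forall>v. E (F v) - F (E v) = poly_op scale f H v) \<and>
     (\<forall>v. H (E v) - E (H v) = E v) \<and>
     (\<forall>v. H (F v) - F (H v) = - F v)"

definition R_submodule ::
  "(complex \<Rightarrow> 'v::ab_group_add \<Rightarrow> 'v) \<Rightarrow> ('v \<Rightarrow> 'v) \<Rightarrow> ('v \<Rightarrow> 'v) \<Rightarrow> ('v \<Rightarrow> 'v) \<Rightarrow> 'v set \<Rightarrow> bool"
  where "R_submodule scale E F H W \<longleftrightarrow>
     module.subspace scale W \<and> (\<forall>x\<in>W. E x \<in> W \<and> F x \<in> W \<and> H x \<in> W)"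

definition R_irreducible ::
  "(complex \<Rightarrow> 'v::ab_group_add \<Rightarrow> 'v) \<Rightarrow> ('v \<Rightarrow> 'v) \<Rightarrow> ('v \<Rightarrow> 'v) \<Rightarrow> ('v \<Rightarrow> 'v) \<Rightarrow> bool"
  where "R_irreducible scale E F H \<longleftrightarrow>
     (UNIV :: 'v set) \<noteq> {0} \<and>
     (\<forall>W. R_submodule scale E F H W \<longrightarrow> W = {0} \<or> W = UNIV)"

inductive_set word_orbit ::
  "('v \<Rightarrow> 'v) \<Rightarrow> ('v \<Rightarrow> 'v) \<Rightarrow> ('v \<Rightarrow> 'v) \<Rightarrow> 'v \<Rightarrow> 'v set"
  for E F H w where
  base: "w \<in> word_orbit E F H w"
| stepE: "x \<in> word_orbit E F H w \<Longrightarrow> E x \<in> word_orbit E F H w"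
| stepF: "x \<in> word_orbit E F H w \<Longrightarrow> F x \<in> word_orbit E F H w"
| stepH: "x \<in> word_orbit E F H w \<Longrightarrow> H x \<in> word_orbit E F H w"

definition cyclic_submodule ::
  "(complex \<Rightarrow> 'v::ab_group_add \<Rightarrow> 'v) \<Rightarrow> ('v \<Rightarrow> 'v) \<Rightarrow> ('v \<Rightarrow> 'v) \<Rightarrow> ('v \<Rightarrow> 'v) \<Rightarrow> 'v \<Rightarrow> 'v set"
  where "cyclic_submodule scale E F H w = module.span scale (word_orbit E F H w)"

text \<open>Whittaker vector of type eta, where eta(E) = c.\<close>
definition whittaker_vector ::
  "(complex \<Rightarrow> 'v::ab_group_add \<Rightarrow> 'v) \<Rightarrow> ('v \<Rightarrow> 'v) \<Rightarrow> complex \<Rightarrow> 'v \<Rightarrow> bool"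
  where "whittaker_vector scale E c v \<longleftrightarrow> E v = scale c v"

definition whittaker_module ::
  "(complex \<Rightarrow> 'v::ab_group_add \<Rightarrow> 'v) \<Rightarrow> ('v \<Rightarrow> 'v) \<Rightarrow> ('v \<Rightarrow> 'v) \<Rightarrow> ('v \<Rightarrow> 'v) \<Rightarrow> complex \<Rightarrow> 'v \<Rightarrow> bool"
  where "whittaker_module scale E F H c w \<longleftrightarrow>
     whittaker_vector scale E c w \<and> cyclic_submodule scale E F H w = (UNIV :: 'v set)"

end

theory Submission
  imports Defs "HOL-Computational_Algebra.Fundamental_Theorem_Algebra" "HOL-Analysis.Continuum_Not_Denumerable"
begin


lemma poly_pochhammer_x: "poly (pochhammer [:0,1:] n) y = pochhammer (y::complex) n"
  by (induction n) (auto simp: pochhammer_Suc)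

lemma degree_pochhammer_x: "degree (pochhammer [:0,1::complex:] n) = n \<and> coeff (pochhammer [:0,1::complex:] n) n = 1"
proof (induction n)
  case 0 then show ?case by simp
next
  case (Suc n)
  define p where "p = pochhammer [:0,1::complex:] n"
  define q where "q = [:of_nat n, 1::complex:]"
  have e: "pochhammer [:0,1::complex:] (Suc n) = p * q"
    unfolding p_def q_def pochhammer_Suc by (simp add: of_nat_poly)
  have dq: "degree q = 1" "coeff q 1 = 1" by (simp_all add: q_def)
  have nz: "p \<noteq> 0" using Suc by (auto simp: p_def)
  have nzq: "q \<noteq> 0" by (simp add: q_def)
  have dm: "degree (p*q) = Suc n" using degree_mult_eq[OF nz nzq] dq Suc by (simp add: p_def)
  have "coeff (p*q) (degree p + degree q) = 1"
    using coeff_mult_degree_sum[of p q] dq Suc by (simp add: p_def)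
  then show ?case using e dm dq Suc by (simp add: p_def)
qed

lemma delta_pochhammer:
  "pochhammer [:0,1::complex:] (Suc n) - pcompose (pochhammer [:0,1:] (Suc n)) [:-1,1:]
   = smult (of_nat (Suc n)) (pochhammer [:0,1:] n)"
proof (rule poly_eq_poly_eq_iff[THEN iffD1], rule ext)
  fix y :: complex
  have "pochhammer y (Suc n) - pochhammer (y - 1) (Suc n) = of_nat (Suc n) * pochhammer y n"
  proof -
    have "pochhammer (y - 1) (Suc n) = (y - 1) * pochhammer y n"
      using pochhammer_rec[of "y - 1" n] by simp
    then show ?thesis by (simp add: pochhammer_Suc algebra_simps)
  qed
  then show "poly (pochhammer [:0,1::complex:] (Suc n) - pcompose (pochhammer [:0,1:] (Suc n)) [:-1,1:]) y =
     poly (smult (of_nat (Suc n)) (pochhammer [:0,1:] n)) y"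
    by (simp add: poly_pcompose poly_pochhammer_x)
qed

lemma antideriv: "\<exists>u::complex poly. u = f + pcompose u [:-1,1:]"
proof (induction "degree f" arbitrary: f rule: less_induct)
  case less
  show ?case
  proof (cases "f = 0")
    case True then show ?thesis by (intro exI[of _ 0]) simp
  next
    case False
    define n where "n = degree f"
    define a where "a = lead_coeff f"
    define r where "r = pochhammer [:0,1::complex:] n"
    define f' where "f' = f - smult a r"
    have r: "degree r = n" "coeff r n = 1" using degree_pochhammer_x[of n] by (auto simp: r_def)
    have "\<exists>u'. u' = f' + pcompose u' [:-1,1:]"
    proof (cases "f' = 0")
      case True then show ?thesis by (intro exI[of _ 0]) simp
    next
      case False
      have "degree f' \<le> n" unfolding f'_def using r
        by (metis degree_diff_le degree_smult_le le_refl n_def order.trans)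
      moreover have "coeff f' n = 0" using r by (simp add: f'_def a_def n_def)
      ultimately have "degree f' < n" using False
        by (metis le_neq_implies_less leading_coeff_0_iff)
      then show ?thesis using less n_def by blast
    qed
    then obtain u' where u': "u' = f' + pcompose u' [:-1,1:]" by blast
    define u where "u = u' + smult (a / of_nat (Suc n)) (pochhammer [:0,1:] (Suc n))"
    have "u - pcompose u [:-1,1:] = (u' - pcompose u' [:-1,1:]) +
        smult (a / of_nat (Suc n)) (pochhammer [:0,1::complex:] (Suc n) - pcompose (pochhammer [:0,1:] (Suc n)) [:-1,1:])"
      unfolding u_def by (simp add: pcompose_add pcompose_smult smult_diff_right algebra_simps)
    also have "\<dots> = f' + smult a r"
      using u' add_diff_cancel_right'[of f' "pcompose u' [:-1,1:]"] by (simp add: delta_pochhammer r_def del: of_nat_Suc)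
    also have "\<dots> = f" by (simp add: f'_def)
    finally show ?thesis by (intro exI[of _ u]) (simp add: algebra_simps)
  qed
qed


lemma lin_add: "Vector_Spaces.linear s s A \<Longrightarrow> A (x + y) = A x + A y"
  using module_hom.add[OF module_hom_linearI] by blast
lemma lin_scale: "Vector_Spaces.linear s s A \<Longrightarrow> A (s a x) = s a (A x)"
  using module_hom.scale[OF module_hom_linearI] by blast
lemma lin_zero: "Vector_Spaces.linear s s A \<Longrightarrow> A 0 = 0"
  using module_hom.zero[OF module_hom_linearI] by blast
lemma lin_diff: "Vector_Spaces.linear s s A \<Longrightarrow> A (x - y) = A x - A y"
  using module_hom.diff[OF module_hom_linearI] by blast
lemma lin_neg: "Vector_Spaces.linear s s A \<Longrightarrow> A (- x) = - A x"
  using module_hom.neg[OF module_hom_linearI] by blast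
lemma lin_sum: "Vector_Spaces.linear s s A \<Longrightarrow> A (sum g I) = (\<Sum>i\<in>I. A (g i))"
  using module_hom.sum[OF module_hom_linearI] by blast

locale cvs = vector_space scale for scale :: "complex \<Rightarrow> 'v::ab_group_add \<Rightarrow> 'v" (infixr \<open>*s\<close> 75)
begin

lemma mk_linear:
  assumes "\<And>x y. g (x + y) = g x + g y" "\<And>a x. g (a *s x) = a *s g x"
  shows "Vector_Spaces.linear scale scale g"
  apply (rule linear_module_homI)
  apply (rule module_hom.intro)
    apply (rule module_axioms)
   apply (rule module_axioms)
  apply (rule module_hom_axioms.intro)
  using assms by auto

lemma poly_op_lt:
  assumes "degree p < N"
  shows "poly_op scale p A v = (\<Sum>i<N. coeff p i *s (A ^^ i) v)"
  unfolding poly_op_def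
proof (rule sum.mono_neutral_left)
  show "finite {..<N}" by simp
  show "{..degree p} \<subseteq> {..<N}" using assms by auto
  show "\<forall>i\<in>{..<N} - {..degree p}. coeff p i *s (A ^^ i) v = 0"
    by (auto simp: coeff_eq_0)
qed

lemma poly_op_0[simp]: "poly_op scale 0 A v = 0"
  by (simp add: poly_op_def)

lemma poly_op_pCons:
  assumes A: "Vector_Spaces.linear scale scale A"
  shows "poly_op scale (pCons a p) A v = a *s v + A (poly_op scale p A v)"
proof -
  have d: "degree (pCons a p) < Suc (Suc (degree p))"
    using degree_pCons_le[of a p] by linarith
  have "poly_op scale (pCons a p) A v = (\<Sum>i<Suc (Suc (degree p)). coeff (pCons a p) i *s (A ^^ i) v)"
    by (rule poly_op_lt[OF d])
  also have "\<dots> = a *s v + (\<Sum>i<Suc (degree p). coeff p i *s A ((A ^^ i) v))"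
    by (simp add: sum.lessThan_Suc_shift del: sum.lessThan_Suc)
  also have "(\<Sum>i<Suc (degree p). coeff p i *s A ((A ^^ i) v)) = A (poly_op scale p A v)"
    by (simp add: poly_op_lt[of p "Suc (degree p)"] lin_sum[OF A] lin_scale[OF A] del: sum.lessThan_Suc)
  finally show ?thesis .
qed

lemma poly_op_const[simp]: "poly_op scale [:a:] A v = a *s v"
  by (simp add: poly_op_def)

lemma poly_op_add:
  "poly_op scale (p + q) A v = poly_op scale p A v + poly_op scale q A v"
proof -
  define N where "N = Suc (max (degree p) (degree q))"
  have "degree (p + q) < N" using degree_add_le_max[of p q] by (simp add: N_def)
  then show ?thesis
    by (simp add: poly_op_lt[of _ N] N_def scale_left_distrib sum.distrib)
qed

lemma poly_op_smult:
  "poly_op scale (smult a p) A v = a *s poly_op scale p A v"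
proof -
  have "degree (smult a p) < Suc (degree p)" using degree_smult_le[of a p] by simp
  then show ?thesis
    by (simp add: poly_op_lt[of _ "Suc (degree p)"] scale_sum_right del: sum.lessThan_Suc)
qed

lemma poly_op_diff:
  "poly_op scale (p - q) A v = poly_op scale p A v - poly_op scale q A v"
  using poly_op_add[of "p - q" q A v] by (simp add: algebra_simps)

lemma poly_op_linear:
  assumes A: "Vector_Spaces.linear scale scale A"
  shows "Vector_Spaces.linear scale scale (poly_op scale p A)"
proof (induction p)
  case 0
  show ?case by (rule mk_linear) simp_all
next
  case (pCons a p)
  show ?case
    by (rule mk_linear) (simp_all add: poly_op_pCons[OF A] lin_add[OF A] lin_add[OF pCons(2)]
        lin_scale[OF A] lin_scale[OF pCons(2)] scale_right_distrib algebra_simps)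
qed

lemma poly_op_mult:
  assumes A: "Vector_Spaces.linear scale scale A"
  shows "poly_op scale (p * q) A v = poly_op scale p A (poly_op scale q A v)"
proof (induction p)
  case (pCons a p)
  have "pCons a p * q = smult a q + pCons 0 (p * q)" by simp
  then show ?case
    by (simp only: poly_op_add poly_op_smult poly_op_pCons[OF A] pCons) simp
qed simp

lemma poly_op_commute:
  assumes A: "Vector_Spaces.linear scale scale A" and B: "Vector_Spaces.linear scale scale B"
    and c: "\<And>x. B (A x) = A (B x)"
  shows "B (poly_op scale p A v) = poly_op scale p A (B v)"
  by (induction p) (simp_all add: poly_op_pCons[OF A] lin_add[OF B] lin_scale[OF B] c lin_zero[OF B])

lemma poly_op_shift:
  assumes A: "Vector_Spaces.linear scale scale A" and B: "Vector_Spaces.linear scale scale B"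
    and c: "\<And>x. B (A x) = A (B x) + s *s B x"
  shows "B (poly_op scale p A v) = poly_op scale (pcompose p [:s,1:]) A (B v)"
proof (induction p)
  case 0 then show ?case by (simp add: lin_zero[OF B])
next
  case (pCons a p)
  have "B (poly_op scale (pCons a p) A v) = a *s B v + (A (poly_op scale (pcompose p [:s,1:]) A (B v))
      + s *s poly_op scale (pcompose p [:s,1:]) A (B v))"
    by (simp add: poly_op_pCons[OF A] lin_add[OF B] lin_scale[OF B] c pCons)
  also have "\<dots> = poly_op scale (pcompose (pCons a p) [:s,1:]) A (B v)"
    by (simp add: pcompose_pCons poly_op_add poly_op_mult[OF A] poly_op_pCons[OF A] lin_zero[OF A] poly_op_smult algebra_simps)
  finally show ?case .
qed

end


lemma shift_nonconst:
  fixes p :: "complex poly"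
  assumes "p = pcompose p [:-1,1:]" "degree p > 0"
  shows False
proof -
  have pe: "poly p y = poly p (y - 1)" for y
    using arg_cong[OF assms(1), of "\<lambda>q. poly q y"] by (simp add: poly_pcompose)
  have n: "poly p (- of_nat n) = poly p 0" for n
  proof (induction n)
    case (Suc n)
    have "- of_nat (Suc n) = (- of_nat n - 1 :: complex)" by simp
    then have "poly p (- of_nat (Suc n)) = poly p (- of_nat n - 1)" by metis
    also have "\<dots> = poly p (- of_nat n)" using pe[of "- of_nat n"] by simp
    finally show ?case using Suc by simp
  qed simp
  define q where "q = p - [:poly p 0:]"
  have qnz: "q \<noteq> 0" using assms(2) unfolding q_def
    by (metis degree_pCons_0 diff_eq_eq diff_zero less_numeral_extra(3) add_0)
  have "range (\<lambda>n::nat. - (of_nat n :: complex)) \<subseteq> {x. poly q x = 0}"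
    using n by (auto simp: q_def)
  moreover have "infinite (range (\<lambda>n::nat. - (of_nat n :: complex)))"
    by (rule range_inj_infinite) (auto simp: inj_def)
  ultimately show False using poly_roots_finite[OF qnz] finite_subset by blast
qed

lemma degree_shift_less:
  fixes p :: "complex poly"
  assumes "degree p > 0"
  shows "degree (p - pcompose p [:-1,1:]) < degree p"
proof -
  have d: "degree (pcompose p [:-1,1:]) = degree p" by (simp add: degree_pcompose)
  have l: "lead_coeff (pcompose p [:-1,1:]) = lead_coeff p" by (simp add: lead_coeff_comp)
  have le: "degree (p - pcompose p [:-1,1:]) \<le> degree p"
    using degree_diff_le[of p "degree p" "pcompose p [:-1,1:]"] d by simp
  have "coeff (p - pcompose p [:-1,1:]) (degree p) = 0" using l d by simp
  then show ?thesis using le assms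
    by (metis le_neq_implies_less leading_coeff_0_iff degree_0 neq0_conv)
qed

locale wh = cvs scale for scale :: "complex \<Rightarrow> 'v::ab_group_add \<Rightarrow> 'v" (infixr \<open>*s\<close> 75) +
  fixes f :: "complex poly" and E F H :: "'v \<Rightarrow> 'v" and c :: complex and w :: 'v
  assumes linE: "Vector_Spaces.linear scale scale E"
    and linF: "Vector_Spaces.linear scale scale F"
    and linH: "Vector_Spaces.linear scale scale H"
    and relEF: "\<And>v. E (F v) - F (E v) = poly_op scale f H v"
    and relHE: "\<And>v. H (E v) - E (H v) = E v"
    and relHF: "\<And>v. H (F v) - F (H v) = - F v"
    and c0: "c \<noteq> 0"
    and irr: "R_irreducible scale E F H"
    and Ew: "E w = c *s w"
    and cyc: "span (word_orbit E F H w) = UNIV"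
begin

lemma EH: "E (H x) = H (E x) + (-1) *s E x"
  using relHE[of x] by (simp add: algebra_simps)
lemma FH: "F (H x) = H (F x) + 1 *s F x"
  using relHF[of x] by (simp add: algebra_simps)

lemma sub_UNIV:
  assumes "R_submodule scale E F H W" "w \<in> W"
  shows "W = UNIV"
proof -
  have sub: "subspace W" and cl: "\<And>x. x \<in> W \<Longrightarrow> E x \<in> W \<and> F x \<in> W \<and> H x \<in> W"
    using assms(1) unfolding R_submodule_def by auto
  have "x \<in> W" if "x \<in> word_orbit E F H w" for x
    using that by induction (use assms(2) cl in auto)
  then have "span (word_orbit E F H w) \<subseteq> W" using span_minimal[OF _ sub] by blast
  then show ?thesis using cyc by auto
qed

lemma w_ne: "w \<noteq> 0"
proof
  assume w0: "w = 0"
  have "x \<in> {0}" if "x \<in> word_orbit E F H w" for x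
    using that by induction (auto simp: w0 lin_zero[OF linE] lin_zero[OF linF] lin_zero[OF linH])
  then have "span (word_orbit E F H w) \<subseteq> {0}" using span_minimal[OF _ subspace_single_0] by blast
  then have "(UNIV::'v set) = {0}" using cyc by auto
  then show False using irr unfolding R_irreducible_def by auto
qed

lemma indep_poly:
  "poly_op scale p H w = 0 \<Longrightarrow> p = 0"
proof (induction "degree p" arbitrary: p rule: less_induct)
  case less
  show ?case
  proof (rule ccontr)
    assume pnz: "p \<noteq> 0"
    show False
    proof (cases "degree p = 0")
      case True
      then obtain a where pa: "p = [:a:]" by (metis degree_eq_zeroE)
      then have "a \<noteq> 0" using pnz by auto
      then show False using less(2) w_ne pa by simp
    next
      case False
      define q where "q = p - pcompose p [:-1,1:]"
      have "E (poly_op scale p H w) = poly_op scale (pcompose p [:-1,1:]) H (E w)"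
        by (rule poly_op_shift[OF linH linE]) (rule EH)
      also have "\<dots> = c *s poly_op scale (pcompose p [:-1,1:]) H w"
        unfolding Ew by (rule lin_scale[OF poly_op_linear[OF linH]])
      finally have "poly_op scale (pcompose p [:-1,1:]) H w = 0"
        using less(2) c0 by (simp add: lin_zero[OF linE])
      then have "poly_op scale q H w = 0" using less(2) by (simp add: q_def poly_op_diff)
      moreover have "degree q < degree p" using False degree_shift_less q_def by auto
      ultimately have "q = 0" using less(1) by blast
      then show False using shift_nonconst[of p] False by (simp add: q_def)
    qed
  qed
qed

end


context cvs begin

lemma span_stable:
  assumes T: "Vector_Spaces.linear scale scale T" and sub: "T ` S \<subseteq> span S" and x: "x \<in> span S"
  shows "T x \<in> span S"
proof -
  have "T x \<in> T ` span S" using x by blast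
  also have "\<dots> = span (T ` S)" using module_hom.span_image[OF module_hom_linearI[OF T]] by simp
  also have "\<dots> \<subseteq> span S" using span_mono[OF sub] span_span by simp
  finally show ?thesis .
qed

lemma poly_op_sum:
  "poly_op scale (\<Sum>i\<in>I. p i) A v = (\<Sum>i\<in>I. poly_op scale (p i) A v)"
  by (induction I rule: infinite_finite_induct) (simp_all add: poly_op_add)

lemma poly_op_monom:
  "poly_op scale (monom a i) A v = a *s (A ^^ i) v"
proof -
  have "degree (monom a i) < Suc i" by (simp add: degree_monom_le le_imp_less_Suc)
  then have "poly_op scale (monom a i) A v = (\<Sum>k<Suc i. coeff (monom a i) k *s (A ^^ k) v)"
    by (rule poly_op_lt)
  also have "\<dots> = (\<Sum>k<Suc i. if k = i then a *s (A ^^ k) v else 0)"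
    by (rule sum.cong) auto
  also have "\<dots> = a *s (A ^^ i) v" by (simp del: sum.lessThan_Suc)
  finally show ?thesis .
qed

lemma poly_op_span: "poly_op scale p A v \<in> span (range (\<lambda>i. (A ^^ i) v))"
  unfolding poly_op_def by (intro span_sum span_scale span_base) auto

end

context wh begin

definition u where "u = (SOME u. u = f + pcompose u [:-1,1:])"
lemma u_eq: "u = f + pcompose u [:-1,1:]"
  unfolding u_def by (rule someI_ex) (rule antideriv)

lemma u_eq2: "pcompose u [:1,1:] = pcompose f [:1,1:] + u"
proof -
  have "pcompose u [:1,1:] = pcompose (f + pcompose u [:-1,1:]) [:1,1:]"
    using u_eq by metis
  also have "\<dots> = pcompose f [:1,1:] + pcompose u (pcompose [:-1,1:] [:1,1:])"
    by (simp add: pcompose_add pcompose_assoc)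
  also have "pcompose [:-1,1:] [:1,1:] = [:0,1::complex:]" by (simp add: pcompose_pCons)
  finally show ?thesis by simp
qed

definition Om where "Om v = F (E v) + poly_op scale u H v"

lemma linOm: "Vector_Spaces.linear scale scale Om"
  unfolding Om_def
  by (rule mk_linear) (simp_all add: lin_add[OF linE] lin_add[OF linF] lin_scale[OF linE] lin_scale[OF linF]
      lin_add[OF poly_op_linear[OF linH]] lin_scale[OF poly_op_linear[OF linH]] scale_right_distrib)

lemma Om_H: "H (Om v) = Om (H v)"
proof -
  have a: "H (F (E v)) = F (E (H v))"
    using relHF[of "E v"] relHE[of v] by (simp add: algebra_simps lin_add[OF linF] lin_diff[OF linF])
  show ?thesis unfolding Om_def
    by (simp add: lin_add[OF linH] a poly_op_commute[OF linH linH])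
qed

lemma Om_E: "E (Om v) = Om (E v)"
proof -
  have "E (Om v) = E (F (E v)) + poly_op scale (pcompose u [:-1,1:]) H (E v)"
    unfolding Om_def by (simp add: lin_add[OF linE] poly_op_shift[OF linH linE EH])
  also have "E (F (E v)) = F (E (E v)) + poly_op scale f H (E v)"
    using relEF[of "E v"] by (simp add: algebra_simps)
  finally show ?thesis unfolding Om_def
    by (subst (2) u_eq) (simp add: poly_op_add add.assoc)
qed

lemma Om_F: "F (Om v) = Om (F v)"
proof -
  have A: "F (Om v) = F (F (E v)) + poly_op scale (pcompose u [:1,1:]) H (F v)"
    unfolding Om_def by (simp add: lin_add[OF linF] poly_op_shift[OF linH linF FH])
  have B: "Om (F v) = F (F (E v) + poly_op scale f H v) + poly_op scale u H (F v)"
    unfolding Om_def using relEF[of v] by (simp add: algebra_simps)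
  have C: "F (F (E v) + poly_op scale f H v) + poly_op scale u H (F v) = F (F (E v)) + poly_op scale (pcompose f [:1,1:]) H (F v) + poly_op scale u H (F v)"
    by (simp add: lin_add[OF linF] poly_op_shift[OF linH linF FH])
  show ?thesis using A B C by (simp add: u_eq2 poly_op_add add.assoc)
qed

abbreviation P where "P \<equiv> span (range (\<lambda>i. (H ^^ i) w))"

lemma P_H: "x \<in> P \<Longrightarrow> H x \<in> P"
proof (rule span_stable[OF linH])
  show "H ` range (\<lambda>i. (H ^^ i) w) \<subseteq> P"
  proof (intro subsetI span_base, elim imageE rangeE)
    fix y x i assume "y = H x" "x = (H ^^ i) w"
    then have "y = (H ^^ Suc i) w" by simp
    then show "y \<in> range (\<lambda>i. (H ^^ i) w)" by blast
  qed
qed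

lemma P_E: "E x \<in> P" if "x \<in> P"
proof -
  have "E ((H ^^ i) w) \<in> P" for i
  proof (induction i)
    case 0 then show ?case by (simp add: Ew span_scale span_base rangeI[of _ 0, where f="\<lambda>i. (H ^^ i) w", simplified])
  next
    case (Suc i)
    have "E ((H ^^ Suc i) w) = H (E ((H ^^ i) w)) - E ((H ^^ i) w)" by (simp add: EH)
    then show ?case using Suc P_H by (simp add: span_diff)
  qed
  then show ?thesis by (intro span_stable[OF linE _ that]) auto
qed

lemma P_F: "F x \<in> P" if "x \<in> P" and z: "Om w = z *s w"
proof -
  have "c *s F w = Om w - poly_op scale u H w"
    by (simp add: Om_def Ew lin_scale[OF linF])
  also have "\<dots> \<in> P" unfolding z
    by (intro span_diff span_scale span_base poly_op_span) (auto intro: rangeI[of _ 0, where f="\<lambda>i. (H ^^ i) w", simplified])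
  finally have Fw: "F w \<in> P" using c0 span_scale[of "c *s F w" _ "inverse c"] by simp
  have "F ((H ^^ i) w) \<in> P" for i
  proof (induction i)
    case 0 then show ?case using Fw by simp
  next
    case (Suc i)
    have "F ((H ^^ Suc i) w) = H (F ((H ^^ i) w)) + F ((H ^^ i) w)" by (simp add: FH)
    then show ?case using Suc P_H by (simp add: span_add)
  qed
  then show ?thesis by (intro span_stable[OF linF _ that(1)]) auto
qed

end


context cvs begin

lemma countable_indep:
  assumes B: "independent B" and S: "countable S" and sub: "B \<subseteq> span S"
  shows "countable B"
proof -
  have "B \<subseteq> (\<Union>T\<in>{A. finite A \<and> A \<subseteq> S}. B \<inter> span T)"
  proof
    fix b assume b: "b \<in> B"
    then have "b \<in> span S" using sub by blast
    then obtain t r where t: "finite t" "t \<subseteq> S" and br: "b = (\<Sum>a\<in>t. r a *s a)"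
      unfolding span_explicit by blast
    have "b \<in> span t" unfolding br by (intro span_sum span_scale span_base) auto
    then show "b \<in> (\<Union>T\<in>{A. finite A \<and> A \<subseteq> S}. B \<inter> span T)" using t b by blast
  qed
  moreover have "countable (\<Union>T\<in>{A. finite A \<and> A \<subseteq> S}. B \<inter> span T)"
  proof (rule countable_UN[OF countable_Collect_finite_subset[OF S]])
    fix T assume "T \<in> {A. finite A \<and> A \<subseteq> S}"
    then have "finite T" by auto
    then have "finite (B \<inter> span T)"
      using independent_span_bound[of T "B \<inter> span T"] independent_mono[OF B] by blast
    then show "countable (B \<inter> span T)" by (rule countable_finite)
  qed
  ultimately show ?thesis by (rule countable_subset)
qed

lemma comm_sub:
  assumes T: "Vector_Spaces.linear scale scale T"
    and linE: "Vector_Spaces.linear scale scale E"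
    and linF: "Vector_Spaces.linear scale scale F"
    and linH: "Vector_Spaces.linear scale scale H"
    and TE: "\<And>x. E (T x) = T (E x)" and TF: "\<And>x. F (T x) = T (F x)" and TH: "\<And>x. H (T x) = T (H x)"
  shows "R_submodule scale E F H {x. T x = 0}" "R_submodule scale E F H (range T)"
proof -
  show "R_submodule scale E F H {x. T x = 0}"
    unfolding R_submodule_def
    using module_hom.subspace_kernel[OF module_hom_linearI[OF T]]
    by (auto simp: TE[symmetric] TF[symmetric] TH[symmetric] lin_zero[OF linE] lin_zero[OF linF] lin_zero[OF linH])
  show "R_submodule scale E F H (range T)"
    unfolding R_submodule_def
    using module_hom.subspace_image[OF module_hom_linearI[OF T] subspace_UNIV]
    by (auto simp: TE TF TH)
qed

end

context wh begin

abbreviation G where "G \<equiv> (\<lambda>i::nat. (H ^^ i) w)"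

lemma inj_G: "inj G"
proof (rule injI)
  fix i j assume e: "(H ^^ i) w = (H ^^ j) w"
  have "poly_op scale (monom 1 i - monom 1 j) H w = 0"
    by (simp add: poly_op_diff poly_op_monom e)
  then have "monom (1::complex) i - monom 1 j = 0" by (rule indep_poly)
  then have "coeff (monom (1::complex) i - monom 1 j) i = 0" by simp
  then show "i = j" by (auto split: if_splits)
qed

lemma indep_G: "independent (range G)"
  unfolding independent_explicit_finite_subsets
proof (intro allI impI ballI)
  fix S uu v assume S: "S \<subseteq> range G" "finite S" and s0: "(\<Sum>v\<in>S. uu v *s v) = 0" and v: "v \<in> S"
  define I where "I = G -` S"
  have fI: "finite I" unfolding I_def by (rule finite_vimageI[OF S(2) inj_G])
  have SI: "S = G ` I" using S(1) unfolding I_def by auto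
  define p where "p = (\<Sum>i\<in>I. monom (uu (G i)) i)"
  have "poly_op scale p H w = (\<Sum>i\<in>I. uu (G i) *s G i)"
    by (simp add: p_def poly_op_sum poly_op_monom)
  also have "\<dots> = (\<Sum>v\<in>S. uu v *s v)"
    unfolding SI by (rule sum.reindex[symmetric, unfolded comp_def]) (rule inj_on_subset[OF inj_G], simp)
  finally have "p = 0" using s0 indep_poly by simp
  obtain i where i: "i \<in> I" "v = G i" using v SI by blast
  have "coeff p i = uu (G i)" unfolding p_def coeff_sum using fI i(1)
    by (simp add: sum.delta)
  then show "uu v = 0" using \<open>p = 0\<close> i by simp
qed

lemma case1:
  assumes z: "Om w = z *s w"
  shows "P = UNIV"
proof (rule sub_UNIV)
  show "R_submodule scale E F H P"
    unfolding R_submodule_def using subspace_span P_E P_F[OF _ z] P_H by blast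
  show "w \<in> P" by (rule span_base) (rule rangeI[of _ 0, where f=G, simplified])
qed

definition wapp :: "nat list \<Rightarrow> 'v" where
  "wapp ks = foldr (\<lambda>k x. if k = 0 then E x else if k = 1 then F x else H x) ks w"

lemma countable_orbit: "countable (word_orbit E F H w)"
proof -
  have "x \<in> range wapp" if "x \<in> word_orbit E F H w" for x
    using that
  proof induction
    case base show ?case by (rule image_eqI[of _ _ "[]"]) (simp_all add: wapp_def)
  next
    case (stepE x) then obtain ks where "x = wapp ks" by blast
    then show ?case by (intro image_eqI[of _ _ "0 # ks"]) (simp_all add: wapp_def)
  next
    case (stepF x) then obtain ks where "x = wapp ks" by blast
    then show ?case by (intro image_eqI[of _ _ "1 # ks"]) (simp_all add: wapp_def)
  next
    case (stepH x) then obtain ks where "x = wapp ks" by blast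
    then show ?case by (intro image_eqI[of _ _ "2 # ks"]) (simp_all add: wapp_def)
  qed
  then show ?thesis by (meson countable_image countable_subset subsetI uncountable_def countableI_type)
qed

definition T where "T z v = Om v - z *s v"

lemma linT: "Vector_Spaces.linear scale scale (T z)"
  unfolding T_def by (rule mk_linear) (simp_all add: lin_add[OF linOm] lin_scale[OF linOm] scale_right_distrib scale_right_diff_distrib mult.commute)

lemma T_poly: "poly_op scale [:-z,1:] Om x = T z x"
  by (simp add: poly_op_pCons[OF linOm] T_def lin_zero[OF linOm])

lemma T_sub1: "R_submodule scale E F H {x. T z x = 0}"
  by (rule comm_sub(1)[OF linT linE linF linH],
      simp_all add: T_def lin_diff[OF linE] lin_diff[OF linF] lin_diff[OF linH]
        lin_scale[OF linE] lin_scale[OF linF] lin_scale[OF linH] Om_E Om_F Om_H)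
lemma T_sub2: "R_submodule scale E F H (range (T z))"
  by (rule comm_sub(2)[OF linT linE linF linH],
      simp_all add: T_def lin_diff[OF linE] lin_diff[OF linF] lin_diff[OF linH]
        lin_scale[OF linE] lin_scale[OF linF] lin_scale[OF linH] Om_E Om_F Om_H)

lemma irr_cases: "R_submodule scale E F H W \<Longrightarrow> W = {0} \<or> W = UNIV"
  using irr unfolding R_irreducible_def by blast

context
  assumes nz: "\<And>z. Om w \<noteq> z *s w"
begin

lemma T_inj: "T z x = 0 \<Longrightarrow> x = 0"
proof -
  have "T z w \<noteq> 0" using nz[of z] by (simp add: T_def)
  then have "{x. T z x = 0} = {0}" using irr_cases[OF T_sub1[of z]] by auto
  then show "T z x = 0 \<Longrightarrow> x = 0" by auto
qed

lemma T_surj: "\<exists>v. T z v = w"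
proof -
  have "T z w \<noteq> 0" using nz[of z] by (simp add: T_def)
  then have "range (T z) \<noteq> {0}" by auto
  then have "range (T z) = UNIV" using irr_cases[OF T_sub2[of z]] by auto
  then show ?thesis by (metis UNIV_I imageE)
qed

definition g where "g z = (SOME v. T z v = w)"
lemma g: "T z (g z) = w" unfolding g_def by (rule someI_ex[OF T_surj])

lemma nz_poly: "poly_op scale q Om w = 0 \<Longrightarrow> q = 0"
proof (induction "degree q" arbitrary: q rule: less_induct)
  case less
  show ?case
  proof (rule ccontr)
    assume qnz: "q \<noteq> 0"
    show False
    proof (cases "degree q = 0")
      case True
      then obtain a where pa: "q = [:a:]" by (metis degree_eq_zeroE)
      then have "a \<noteq> 0" using qnz by auto
      then show False using less(2) w_ne pa by simp
    next
      case False
      then obtain z where "poly q z = 0"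
        using fundamental_theorem_of_algebra[of q] constant_degree[of q] False by blast
      then obtain q' where q': "q = [:-z,1:] * q'" using poly_eq_0_iff_dvd by (metis dvdE)
      have q'nz: "q' \<noteq> 0" using qnz q' by auto
      have "degree q = degree [:-z,1:] + degree q'" unfolding q' by (rule degree_mult_eq) (auto simp: q'nz)
      have "poly_op scale q Om w = T z (poly_op scale q' Om w)"
        unfolding q' by (simp only: poly_op_mult[OF linOm] T_poly)
      then have "T z (poly_op scale q' Om w) = 0" using less(2) by simp
      then have "poly_op scale q' Om w = 0" by (rule T_inj)
      moreover have "degree q' < degree q" using \<open>degree q = degree [:-z,1:] + degree q'\<close> by simp
      ultimately show False using less(1) q'nz by blast
    qed
  qed
qed

lemma fam:
  assumes Z: "finite Z" and s: "(\<Sum>z\<in>Z. a z *s g z) = 0" and z0: "z0 \<in> Z"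
  shows "a z0 = 0"
proof -
  define L where "L z = (\<Prod>y\<in>Z-{z}. [:-y,1::complex:])" for z
  define PZ where "PZ = (\<Prod>y\<in>Z. [:-y,1::complex:])"
  have PL: "poly_op scale PZ Om (g z) = poly_op scale (L z) Om w" if "z \<in> Z" for z
  proof -
    have "PZ = L z * [:-z,1:]" using prod.remove[OF Z that, of "\<lambda>y. [:-y,1::complex:]"] unfolding PZ_def L_def
      by (metis mult.commute)
    then show ?thesis by (simp only: poly_op_mult[OF linOm] T_poly g)
  qed
  have "0 = poly_op scale PZ Om (\<Sum>z\<in>Z. a z *s g z)" using s by (simp add: lin_zero[OF poly_op_linear[OF linOm]])
  also have "\<dots> = (\<Sum>z\<in>Z. a z *s poly_op scale (L z) Om w)"
    by (simp add: lin_sum[OF poly_op_linear[OF linOm]] lin_scale[OF poly_op_linear[OF linOm]] PL)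
  also have "\<dots> = poly_op scale (\<Sum>z\<in>Z. smult (a z) (L z)) Om w"
    by (simp add: poly_op_sum poly_op_smult)
  finally have Q: "(\<Sum>z\<in>Z. smult (a z) (L z)) = 0" using nz_poly by metis
  have "poly (\<Sum>z\<in>Z. smult (a z) (L z)) z0 = a z0 * poly (L z0) z0"
  proof -
    have "poly (\<Sum>z\<in>Z. smult (a z) (L z)) z0 = (\<Sum>z\<in>Z. a z * poly (L z) z0)"
      by (simp add: poly_sum)
    also have "\<dots> = a z0 * poly (L z0) z0 + (\<Sum>z\<in>Z-{z0}. a z * poly (L z) z0)"
      by (rule sum.remove[OF Z z0])
    also have "(\<Sum>z\<in>Z-{z0}. a z * poly (L z) z0) = 0"
    proof (rule sum.neutral, rule ballI)
      fix z assume "z \<in> Z - {z0}"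
      then have "z0 \<in> Z - {z}" using z0 by auto
      then have "poly (L z) z0 = 0" unfolding L_def poly_prod using Z
        by (auto simp: prod_zero_iff)
      then show "a z * poly (L z) z0 = 0" by simp
    qed
    finally show ?thesis by simp
  qed
  moreover have "poly (L z0) z0 \<noteq> 0" unfolding L_def poly_prod using Z by auto
  ultimately show ?thesis using Q by simp
qed

lemma inj_g: "inj g"
proof (rule injI)
  fix z1 z2 assume e: "g z1 = g z2"
  show "z1 = z2"
  proof (rule ccontr)
    assume ne: "z1 \<noteq> z2"
    have "w = T z1 (g z2)" using g[of z1] e by simp
    also have "\<dots> = T z2 (g z2) + (z2 - z1) *s g z2" by (simp add: T_def algebra_simps scale_left_diff_distrib)
    finally have "(z2 - z1) *s g z2 = 0" using g[of z2] by simp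
    then have "g z2 = 0" using ne by simp
    then have "w = 0" using g[of z2] lin_zero[OF linT] by metis
    then show False using w_ne by simp
  qed
qed

lemma indep_g: "independent (range g)"
  unfolding independent_explicit_finite_subsets
proof (intro allI impI ballI)
  fix S uu v assume S: "S \<subseteq> range g" "finite S" and s0: "(\<Sum>v\<in>S. uu v *s v) = 0" and v: "v \<in> S"
  define I where "I = g -` S"
  have fI: "finite I" unfolding I_def by (rule finite_vimageI[OF S(2) inj_g])
  have SI: "S = g ` I" using S(1) unfolding I_def by auto
  have "(\<Sum>i\<in>I. uu (g i) *s g i) = (\<Sum>v\<in>S. uu v *s v)"
    unfolding SI by (rule sum.reindex[symmetric, unfolded comp_def]) (rule inj_on_subset[OF inj_g], simp)
  then have "(\<Sum>i\<in>I. uu (g i) *s g i) = 0" using s0 by simp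
  moreover obtain i where i: "i \<in> I" "v = g i" using v SI by blast
  ultimately show "uu v = 0" using fam[OF fI, of "\<lambda>i. uu (g i)"] by simp
qed

lemma case2_False: False
proof -
  have "countable (range g)"
    by (rule countable_indep[OF indep_g countable_orbit]) (simp add: cyc)
  then have "countable (UNIV :: complex set)" using countable_image_inj_on inj_g by blast
  then show False using uncountable_UNIV_complex by simp
qed

end

lemma main: "inj G \<and> independent (range G) \<and> P = UNIV"
proof -
  have "\<exists>z. Om w = z *s w" using case2_False by blast
  then obtain z where "Om w = z *s w" by blast
  then show ?thesis using inj_G indep_G case1 by blast
qed

end


theorem mainTheorem9:
  fixes scale :: "complex \<Rightarrow> 'v::ab_group_add \<Rightarrow> 'v"
    and f :: "complex poly"
    and E F H :: "'v \<Rightarrow> 'v"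
    and c :: complex
    and w :: 'v
  assumes "R_module scale f E F H"
    and "c \<noteq> 0"
    and "R_irreducible scale E F H"
    and "whittaker_module scale E F H c w"
  shows "inj (\<lambda>i::nat. (H ^^ i) w)
    \<and> module.independent scale (range (\<lambda>i::nat. (H ^^ i) w))
    \<and> module.span scale (range (\<lambda>i::nat. (H ^^ i) w)) = UNIV"
proof -
  have W: "wh scale f E F H c w"
    using assms unfolding wh_def wh_axioms_def cvs_def R_module_def whittaker_module_def
      whittaker_vector_def cyclic_submodule_def by auto
  show ?thesis using wh.main[OF W] .
qed

end
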